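(* Let $\lambda>0$ and $r,x\in\mathbb{R}$, and let $X$ be a Poisson random variable with parameter $\lambda$. For every integer $n\ge 0$, \[ \sum_{m=0}^n \binom{n}{m} x^{n-m} E[(X+r\lambda)^m] = \sum_{m=0}^n \binom{n}{m} x^{n-m} Bel_{m,r}(\lambda) = \sum_{k=0}^n \lambda^k S_{2,r}(n,k|x). \]
   Context: A Poisson random variable $X$ with parameter $\lambda>0$ satisfies $P(X=i)=e^{-\lambda}\lambda^i/i!$ for $i=0,1,2,\dots$. For $r,x\in\mathbb{R}$ and integer $k\ge 0$, the extended Stirling polynomials of the second kind are defined by $\frac{1}{k!} e^{xt}(e^t-1+rt)^k = \sum_{n=k}^\infty S_{2,r}(n,k|x)\frac{t^n}{n!}$. The extended Bell polynomials $Bel_{n,r}(\lambda)$ are defined by $e^{\lambda(e^t-1+rt)} = \sum_{n=0}^\infty Bel_{n,r}(\lambda)\frac{t^n}{n!}$. *)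

theory Defs
  imports "HOL-Probability.Probability" "HOL-Computational_Algebra.Formal_Power_Series"
begin

definition ext_gen :: "real \<Rightarrow> real fps" where
  "ext_gen r = fps_exp 1 - 1 + fps_const r * fps_X"

definition S2r :: "real \<Rightarrow> nat \<Rightarrow> nat \<Rightarrow> real \<Rightarrow> real" where
  "S2r r n k x = fact n * fps_nth (fps_const (1 / fact k) * fps_exp x * (ext_gen r) ^ k) n"

definition Belr :: "nat \<Rightarrow> real \<Rightarrow> real \<Rightarrow> real" where
  "Belr n r l = fact n * fps_nth (fps_compose (fps_exp l) (ext_gen r)) n"

end

theory Submission
  imports Defs
begin

no_notation vec_nth (infixl "$" 90)
notation fps_nth (infixl "$" 75)


lemma ext_gen_0[simp]: "ext_gen r $ 0 = 0"
  by (simp add: ext_gen_def)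

lemma deriv_G:
  "fps_deriv (fps_exp l oo ext_gen r) = fps_const l * (fps_exp l oo ext_gen r) * (fps_exp 1 + fps_const r)"
proof -
  have d: "fps_deriv (ext_gen r) = fps_exp 1 + fps_const r"
    by (simp add: ext_gen_def)
  show ?thesis
    by (simp add: fps_compose_deriv d fps_const_mult_apply_left)
qed

lemma G_rec:
  fixes l r :: real
  defines "G \<equiv> fps_exp l oo ext_gen r"
  shows "fact (Suc m) * (G $ Suc m) = l * r * (fact m * G$m) + l * (\<Sum>j\<le>m. real (m choose j) * (fact j * G$j))"
proof -
  have "fps_deriv G $ m = (fps_const l * G * (fps_exp 1 + fps_const r)) $ m"
    using deriv_G unfolding G_def by simp
  hence "real (Suc m) * G $ Suc m = l * ((G * fps_exp 1) $ m + r * G $ m)"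
  proof -
    have "fps_const l * G * (fps_exp 1 + fps_const r) = fps_const l * (G * fps_exp 1) + fps_const (l*r) * G"
      by (simp add: algebra_simps fps_const_mult[symmetric] del: fps_const_mult)
    thus ?thesis using \<open>fps_deriv G $ m = _\<close>
      by (simp only: fps_add_nth fps_mult_left_const_nth fps_deriv_nth) (simp add: algebra_simps)
  qed
  also have "(G * fps_exp 1) $ m = (\<Sum>j=0..m. G$j / fact (m - j))"
    by (simp add: fps_mult_nth)
  finally have e: "real (Suc m) * G $ Suc m = l * ((\<Sum>j=0..m. G$j / fact (m - j)) + r * G $ m)" .
  have s: "fact m * (\<Sum>j=0..m. G$j / fact (m - j)) = (\<Sum>j\<le>m. real (m choose j) * (fact j * G$j))"
    unfolding sum_distrib_left atLeast0AtMost
  proof (rule sum.cong[OF refl])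
    fix j assume "j \<in> {..m}"
    hence "j \<le> m" by simp
    thus "fact m * (G $ j / fact (m - j)) = real (m choose j) * (fact j * G $ j)"
      by (simp add: binomial_fact field_simps)
  qed
  have "fact (Suc m) * (G $ Suc m) = fact m * (real (Suc m) * G $ Suc m)"
    by (simp add: algebra_simps)
  also have "\<dots> = l * r * (fact m * G$m) + l * (fact m * (\<Sum>j=0..m. G$j / fact (m - j)))"
    unfolding e by (simp add: algebra_simps)
  finally show ?thesis unfolding s .
qed



lemma int_as_sum:
  fixes M :: "'a measure" and X :: "'a \<Rightarrow> nat" and f :: "nat \<Rightarrow> real"
  assumes "prob_space M"
    and X: "X \<in> measurable M (count_space UNIV)"
    and sm: "summable (\<lambda>i. \<bar>f i\<bar> * measure M {\<omega> \<in> space M. X \<omega> = i})"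
  shows "(\<integral>\<omega>. f (X \<omega>) \<partial>M) = (\<Sum>i. f i * measure M {\<omega> \<in> space M. X \<omega> = i})"
proof -
  interpret prob_space M by fact
  define A where "A i = {\<omega> \<in> space M. X \<omega> = i}" for i
  have A: "A i \<in> sets M" for i
    unfolding A_def using X by measurable
  define g where "g i \<omega> = f i * indicator (A i) \<omega>" for i \<omega>
  have gi: "integrable M (g i)" for i
    unfolding g_def using A by (intro integrable_mult_right integrable_real_indicator) (auto simp: emeasure_eq_measure)
  have single: "(\<lambda>i. g i \<omega>) = (\<lambda>i. if i = X \<omega> then f (X \<omega>) else 0)" if "\<omega> \<in> space M" for \<omega>
    using that by (auto simp: g_def A_def indicator_def)
  have "AE \<omega> in M. summable (\<lambda>i. norm (g i \<omega>))"
  proof (rule AE_I2)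
    fix \<omega> assume "\<omega> \<in> space M"
    hence "(\<lambda>i. norm (g i \<omega>)) = (\<lambda>i. if i = X \<omega> then norm (f (X \<omega>)) else 0)"
      using single[of \<omega>] by (auto simp: fun_eq_iff split: if_splits dest: fun_cong)
    thus "summable (\<lambda>i. norm (g i \<omega>))" by simp
  qed
  moreover have "(\<integral>\<omega>. norm (g i \<omega>) \<partial>M) = \<bar>f i\<bar> * measure M (A i)" for i
    unfolding g_def by (simp add: abs_mult A)
  moreover have "integral\<^sup>L M (g i) = f i * measure M (A i)" for i
    unfolding g_def by (simp add: A)
  ultimately have "(\<integral>\<omega>. (\<Sum>i. g i \<omega>) \<partial>M) = (\<Sum>i. f i * measure M (A i))"
    using integral_suminf[of M g] gi sm unfolding A_def by auto
  moreover have "(\<integral>\<omega>. (\<Sum>i. g i \<omega>) \<partial>M) = (\<integral>\<omega>. f (X \<omega>) \<partial>M)"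
  proof (rule Bochner_Integration.integral_cong[OF refl])
    fix \<omega> assume "\<omega> \<in> space M"
    thus "(\<Sum>i. g i \<omega>) = f (X \<omega>)" using single[of \<omega>] sums_single[of "X \<omega>" "\<lambda>_. f (X \<omega>)"] by (simp add: sums_iff)
  qed
  ultimately show ?thesis unfolding A_def by simp
qed


lemma pow_le_fact_exp:
  fixes y :: real assumes "y \<ge> 0" shows "y ^ m \<le> fact m * exp y"
proof -
  have s: "(\<lambda>n. y ^ n / fact n) sums exp y"
    using exp_converges[of y] by (simp add: divide_inverse mult.commute)
  have "y ^ m / fact m = (\<Sum>n\<in>{m}. y ^ n / fact n)" by simp
  also have "\<dots> \<le> exp y"
    using s assms by (intro sum_le_suminf[where f="\<lambda>n. y ^ n / fact n", THEN order_trans]) (auto simp: sums_iff)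
  finally show ?thesis by (simp add: divide_le_eq mult.commute)
qed


definition pp :: "real \<Rightarrow> nat \<Rightarrow> real" where "pp l i = exp (- l) * l ^ i / fact i"

lemma pp_nonneg: "l \<ge> 0 \<Longrightarrow> pp l i \<ge> 0" by (simp add: pp_def)

lemma pp_Suc: "real (Suc i) * pp l (Suc i) = l * pp l i"
proof -
  have "real (Suc i) * pp l (Suc i) = exp (- l) * l ^ Suc i * (real (Suc i) / fact (Suc i))"
    by (simp add: pp_def)
  also have "real (Suc i) / fact (Suc i) = 1 / fact i"
    by (simp add: fact_Suc del: of_nat_Suc)
  finally show ?thesis by (simp add: pp_def)
qed

lemma summable_abs_mom:
  assumes "l \<ge> 0" shows "summable (\<lambda>i. \<bar>(real i + c) ^ m\<bar> * pp l i)"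
proof (rule summable_comparison_test[where g = "\<lambda>i. (fact m * exp \<bar>c\<bar> * exp (- l)) * (inverse (fact i) * (exp 1 * l) ^ i)"])
  show "summable (\<lambda>i. (fact m * exp \<bar>c\<bar> * exp (- l)) * (inverse (fact i) * (exp 1 * l) ^ i))"
    by (intro summable_mult summable_exp)
  show "\<exists>N. \<forall>n\<ge>N. norm (\<bar>(real n + c) ^ m\<bar> * pp l n) \<le> fact m * exp \<bar>c\<bar> * exp (- l) * (inverse (fact n) * (exp 1 * l) ^ n)"
  proof (intro exI allI impI)
    fix n :: nat
    have "\<bar>(real n + c) ^ m\<bar> \<le> (real n + \<bar>c\<bar>) ^ m"
      unfolding power_abs by (intro power_mono) auto
    also have "\<dots> \<le> fact m * exp (real n + \<bar>c\<bar>)"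
      by (intro pow_le_fact_exp) auto
    also have "exp (real n + \<bar>c\<bar>) = exp 1 ^ n * exp \<bar>c\<bar>"
      using exp_of_nat_mult[of n 1] by (simp add: exp_add)
    finally have b: "\<bar>(real n + c) ^ m\<bar> \<le> fact m * (exp 1 ^ n * exp \<bar>c\<bar>)" .
    have "norm (\<bar>(real n + c) ^ m\<bar> * pp l n) = \<bar>(real n + c) ^ m\<bar> * pp l n"
      using pp_nonneg[OF assms] by (simp add: abs_mult)
    also have "\<dots> \<le> fact m * (exp 1 ^ n * exp \<bar>c\<bar>) * pp l n"
      using b pp_nonneg[OF assms] by (intro mult_right_mono) auto
    also have "\<dots> = fact m * exp \<bar>c\<bar> * exp (- l) * (inverse (fact n) * (exp 1 * l) ^ n)"
      by (simp add: pp_def power_mult_distrib field_simps)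
    finally show "norm (\<bar>(real n + c) ^ m\<bar> * pp l n) \<le> fact m * exp \<bar>c\<bar> * exp (- l) * (inverse (fact n) * (exp 1 * l) ^ n)" .
  qed
qed

lemma summable_mom:
  assumes "l \<ge> 0" shows "summable (\<lambda>i. (real i + c) ^ m * pp l i)"
proof (rule summable_rabs_cancel)
  show "summable (\<lambda>i. \<bar>(real i + c) ^ m * pp l i\<bar>)"
    using summable_abs_mom[OF assms, of c m] pp_nonneg[OF assms] by (simp add: abs_mult)
qed

definition ee :: "real \<Rightarrow> real \<Rightarrow> nat \<Rightarrow> real" where
  "ee l c m = (\<Sum>i. (real i + c) ^ m * pp l i)"

lemma ee_0: "ee l c 0 = 1"
proof -
  have "(\<lambda>i. l ^ i / fact i) sums exp l"
    using exp_converges[of l] by (simp add: divide_inverse mult.commute)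
  hence "(\<lambda>i. exp (- l) * (l ^ i / fact i)) sums (exp (- l) * exp l)"
    by (rule sums_mult)
  thus ?thesis unfolding ee_def pp_def by (simp add: sums_iff exp_minus field_simps)
qed

lemma ee_rec:
  assumes "l \<ge> 0"
  shows "ee l c (Suc m) = c * ee l c m + l * (\<Sum>j\<le>m. real (m choose j) * ee l c j)"
proof -
  define q where "q i = real i * (real i + c) ^ m * pp l i" for i
  have qeq: "q i = (real i + c) ^ Suc m * pp l i - c * ((real i + c) ^ m * pp l i)" for i
    unfolding q_def by (simp add: algebra_simps)
  have sq: "summable q"
    unfolding qeq by (intro summable_diff summable_mult summable_mom assms)
  have "ee l c (Suc m) = (\<Sum>i. q i + c * ((real i + c) ^ m * pp l i))"
    unfolding ee_def by (simp add: qeq)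
  also have "\<dots> = suminf q + c * ee l c m"
    unfolding ee_def using sq summable_mom[OF assms, of c m]
    by (simp add: suminf_add[symmetric] suminf_mult summable_mult)
  also have "suminf q = (\<Sum>i. q (Suc i))"
    using suminf_split_head[OF sq] by (simp add: q_def)
  also have "\<dots> = (\<Sum>i. l * ((real i + c + 1) ^ m * pp l i))"
  proof -
    have "q (Suc i) = l * ((real i + c + 1) ^ m * pp l i)" for i
    proof -
      have "q (Suc i) = (real (Suc i) + c) ^ m * (real (Suc i) * pp l (Suc i))"
        unfolding q_def by (simp add: algebra_simps)
      also have "\<dots> = l * ((real i + c + 1) ^ m * pp l i)"
        unfolding pp_Suc by (simp add: algebra_simps)
      finally show ?thesis .
    qed
    thus ?thesis by simp
  qed
  also have "\<dots> = l * (\<Sum>i. (\<Sum>j\<le>m. real (m choose j) * ((real i + c) ^ j * pp l i)))"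
  proof -
    have "(real i + c + 1) ^ m * pp l i = (\<Sum>j\<le>m. real (m choose j) * ((real i + c) ^ j * pp l i))" for i
      unfolding binomial_ring[of "real i + c" 1 m] sum_distrib_right by (simp add: algebra_simps)
    moreover have "summable (\<lambda>i. (real i + c + 1) ^ m * pp l i)"
      using summable_mom[OF assms, of "c+1" m] by (simp add: add.assoc)
    ultimately show ?thesis by (simp add: suminf_mult)
  qed
  also have "(\<Sum>i. (\<Sum>j\<le>m. real (m choose j) * ((real i + c) ^ j * pp l i))) = (\<Sum>j\<le>m. real (m choose j) * ee l c j)"
    unfolding ee_def
    by (subst suminf_sum) (auto intro: summable_mult summable_mom assms simp: suminf_mult summable_mom assms)
  finally show ?thesis by (simp add: algebra_simps)
qed



lemma G_coeff:
  assumes "m \<le> n"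
  shows "(\<Sum>k\<le>n. l ^ k / fact k * (ext_gen r ^ k) $ m) = (fps_exp l oo ext_gen r) $ m"
proof -
  have "(fps_exp l oo ext_gen r) $ m = (\<Sum>k=0..m. l ^ k / fact k * (ext_gen r ^ k) $ m)"
    by (simp add: fps_compose_nth)
  also have "\<dots> = (\<Sum>k\<le>n. l ^ k / fact k * (ext_gen r ^ k) $ m)"
  proof (rule sum.mono_neutral_left)
    show "\<forall>i\<in>{..n} - {0..m}. l ^ i / fact i * (ext_gen r ^ i) $ m = 0"
      using startsby_zero_power_prefix[of "ext_gen r"] by auto
  qed (use assms in auto)
  finally show ?thesis by simp
qed

lemma second:
  "(\<Sum>m\<le>n. real (n choose m) * x ^ (n - m) * Belr m r l) = (\<Sum>k\<le>n. l ^ k * S2r r n k x)"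
proof -
  define G where "G = fps_exp l oo ext_gen r"
  define g where "g = ext_gen r"
  have "(\<Sum>m\<le>n. real (n choose m) * x ^ (n - m) * Belr m r l)
      = (\<Sum>m\<le>n. fact n * (G $ m * (x ^ (n - m) / fact (n - m))))"
  proof (rule sum.cong[OF refl])
    fix m assume "m \<in> {..n}" hence "m \<le> n" by simp
    thus "real (n choose m) * x ^ (n - m) * Belr m r l = fact n * (G $ m * (x ^ (n - m) / fact (n - m)))"
      unfolding Belr_def G_def by (simp add: binomial_fact field_simps)
  qed
  also have "\<dots> = fact n * (\<Sum>m\<le>n. (\<Sum>k\<le>n. l ^ k / fact k * (g ^ k) $ m) * (x ^ (n - m) / fact (n - m)))"
    unfolding sum_distrib_left
  proof (rule sum.cong[OF refl])
    fix m assume "m \<in> {..n}" hence "m \<le> n" by simp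
    show "fact n * (G $ m * (x ^ (n - m) / fact (n - m))) =
      fact n * ((\<Sum>k\<le>n. l ^ k / fact k * (g ^ k) $ m) * (x ^ (n - m) / fact (n - m)))"
      unfolding G_def g_def G_coeff[OF \<open>m \<le> n\<close>] ..
  qed
  also have "\<dots> = fact n * (\<Sum>k\<le>n. l ^ k / fact k * (\<Sum>m\<le>n. (g ^ k) $ m * (x ^ (n - m) / fact (n - m))))"
  proof -
    have "(\<Sum>m\<le>n. (\<Sum>k\<le>n. l ^ k / fact k * (g ^ k) $ m) * (x ^ (n - m) / fact (n - m)))
       = (\<Sum>m\<le>n. \<Sum>k\<le>n. l ^ k / fact k * (g ^ k) $ m * (x ^ (n - m) / fact (n - m)))"
      by (simp only: sum_distrib_right)
    also have "\<dots> = (\<Sum>k\<le>n. \<Sum>m\<le>n. l ^ k / fact k * (g ^ k) $ m * (x ^ (n - m) / fact (n - m)))"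
      by (rule sum.swap)
    also have "\<dots> = (\<Sum>k\<le>n. l ^ k / fact k * (\<Sum>m\<le>n. (g ^ k) $ m * (x ^ (n - m) / fact (n - m))))"
      by (simp only: sum_distrib_left mult.assoc)
    finally show ?thesis by (rule arg_cong)
  qed
  also have "\<dots> = (\<Sum>k\<le>n. l ^ k * S2r r n k x)"
  proof -
  have eqk: "fact n * (l ^ k / fact k * (\<Sum>m\<le>n. (g ^ k) $ m * (x ^ (n - m) / fact (n - m)))) = l ^ k * S2r r n k x" for k
  proof -
    have "(fps_const (1 / fact k) * fps_exp x * g ^ k) $ n = 1 / fact k * (g ^ k * fps_exp x) $ n"
    proof -
      have "fps_const (1 / fact k) * fps_exp x * g ^ k = fps_const (1 / fact k) * (g ^ k * fps_exp x)"
        by (simp only: mult.assoc mult.commute[of "fps_exp x"])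
      thus ?thesis by (simp only: fps_mult_left_const_nth)
    qed
    also have "(g ^ k * fps_exp x) $ n = (\<Sum>m\<le>n. (g ^ k) $ m * (x ^ (n - m) / fact (n - m)))"
      by (simp add: fps_mult_nth atLeast0AtMost)
    finally show ?thesis
      unfolding S2r_def g_def by simp
  qed
  show ?thesis by (simp only: sum_distrib_left[of "fact n"] eqk)
  qed
  finally show ?thesis .
qed


lemma ee_Belr:
  assumes "l \<ge> 0"
  shows "ee l (r * l) m = Belr m r l"
proof (induction m rule: less_induct)
  case (less m)
  show ?case
  proof (cases m)
    case 0
    thus ?thesis by (simp add: ee_0 Belr_def)
  next
    case (Suc k)
    have IH: "ee l (r * l) j = Belr j r l" if "j \<le> k" for j
      using less that Suc by auto
    have "ee l (r * l) (Suc k) = r * l * ee l (r * l) k + l * (\<Sum>j\<le>k. real (k choose j) * ee l (r * l) j)"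
      by (rule ee_rec[OF assms])
    also have "\<dots> = r * l * Belr k r l + l * (\<Sum>j\<le>k. real (k choose j) * Belr j r l)"
      using IH by simp
    also have "\<dots> = Belr (Suc k) r l"
      unfolding Belr_def G_rec by (simp add: algebra_simps)
    finally show ?thesis using Suc by simp
  qed
qed

theorem mainTheorem9:
  fixes M :: "'a measure" and X :: "'a \<Rightarrow> nat" and l r x :: real and n :: nat
  assumes "prob_space M"
    and "l > 0"
    and "X \<in> measurable M (count_space UNIV)"
    and "\<And>i. measure M {\<omega> \<in> space M. X \<omega> = i} = exp (- l) * l ^ i / fact i"
  shows "(\<Sum>m\<le>n. real (n choose m) * x ^ (n - m) *
            (\<integral>\<omega>. (real (X \<omega>) + r * l) ^ m \<partial>M))
           = (\<Sum>m\<le>n. real (n choose m) * x ^ (n - m) * Belr m r l)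
       \<and> (\<Sum>m\<le>n. real (n choose m) * x ^ (n - m) * Belr m r l)
           = (\<Sum>k\<le>n. l ^ k * S2r r n k x)"
proof
  have P: "measure M {\<omega> \<in> space M. X \<omega> = i} = pp l i" for i
    using assms(4) by (simp add: pp_def)
  have I: "(\<integral>\<omega>. (real (X \<omega>) + r * l) ^ m \<partial>M) = Belr m r l" for m
  proof -
    have "(\<integral>\<omega>. (real (X \<omega>) + r * l) ^ m \<partial>M) = (\<Sum>i. (real i + r * l) ^ m * measure M {\<omega> \<in> space M. X \<omega> = i})"
      using assms(1,3) summable_abs_mom[of l "r * l" m] assms(2)
      by (intro int_as_sum[where f = "\<lambda>i. (real i + r * l) ^ m"]) (auto simp: P)
    also have "\<dots> = ee l (r * l) m" unfolding ee_def P ..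
    finally show ?thesis using ee_Belr[of l r m] assms(2) by simp
  qed
  show "(\<Sum>m\<le>n. real (n choose m) * x ^ (n - m) *
            (\<integral>\<omega>. (real (X \<omega>) + r * l) ^ m \<partial>M))
           = (\<Sum>m\<le>n. real (n choose m) * x ^ (n - m) * Belr m r l)"
    by (simp only: I)
  show "(\<Sum>m\<le>n. real (n choose m) * x ^ (n - m) * Belr m r l)
           = (\<Sum>k\<le>n. l ^ k * S2r r n k x)"
    by (rule second)
qed

end
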